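(* Let $\mathcal{A}=\langle L,\mathcal{X},E\rangle$ be a timed automaton, $\ell_0,\ell\in L$, $\nu\in\mathbb{R}_{\ge0}^{\mathcal{X}}$ and $\gamma\subseteq\mathcal{X}$. Then $\mathcal{A}$ has a run from $\langle\ell_0,\mathbf{0}\rangle$ to $\langle\ell,\nu\rangle$ along which the set of clocks reset (i.e. the union of the reset sets $\lambda$ of the discrete transitions taken) is exactly $\gamma$ if and only if $R(\mathcal{A})$ has a run from the state $\langle\ell_0,\mathbf{0},\{\mathbf{0}\},\gamma\rangle$ to some state $\langle\ell,\upsilon,Z,\emptyset\rangle$ with $\upsilon\in\mathbb{N}^{\mathcal{X}}$ and $Z\in\mathcal{Z}_1(\mathcal{X})$ such that $\nu-\upsilon\in Z$.
   Context: Let $\mathcal{X}$ be a finite set of clocks. Clock constraints $\Phi(\mathcal{X})$ are generated by $\varphi ::= \mathbf{true}\mid x<k\mid x=k\mid x>k\mid \varphi\wedge\varphi$ with $k\in\mathbb{N}$, $x\in\mathcal{X}$. A clock valuation is a map $\nu:\mathcal{X}\to\mathbb{R}_{\ge0}$ (the same operations are used for maps $\mathcal{X}\to\mathbb{R}$); $\nu\models\varphi$ denotes satisfaction; $\mathbf{0}$ is the all-zero valuation; $(\nu+t)(x)=\nu(x)+t$ for $t\ge0$; for $\lambda\subseteq\mathcal{X}$, $\nu[\lambda\leftarrow0]$ sets clocks in $\lambda$ to $0$ and leaves others unchanged. A timed automaton is $\mathcal{A}=\langle L,\mathcal{X},E\rangle$ with finite location set $L$, finite clock set $\mathcal{X}$,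 and edges $E\subseteq L\times\Phi(\mathcal{X})\times2^{\mathcal{X}}\times L$. A configuration is a pair $\langle\ell,\nu\rangle$. Transitions: delay $\langle\ell,\nu\rangle\xrightarrow{d}\langle\ell,\nu+d\rangle$ for $d\ge0$; discrete $\langle\ell,\nu\rangle\xrightarrow{0}\langle\ell',\nu[\lambda\leftarrow0]\rangle$ whenever $\langle\ell,\varphi,\lambda,\ell'\rangle\in E$ and $\nu\models\varphi$. A run is a finite (possibly empty) sequence of consecutive transitions. A 1-bounded zone is a subset of $[0,1]^{\mathcal{X}}$ defined by a finite conjunction of constraints $x_i\bowtie c$ and $x_i-x_j\bowtie c$ with $c\in\{-1,0,1\}$ and $\bowtie\in\{<,\le,=,\ge,>\}$; $\mathcal{Z}_1(\mathcal{X})$ is the (finite) set of 1-bounded zones. For a set $Z$ of valuations, $Z[\lambda\leftarrow0]=\{\nu[\lambda\leftarrow0]:\nu\in Z\}$ and $\overrightarrow{Z}=\{\nu+t:\nu\in Z,t\ge0\}\cap[0,1]^{\mathcal{X}}$; $[\![x=1]\!]$ is the set of valuations with $x=1$; for $\upsilon\in\mathbb{N}^{\mathcal{X}}$, $\upsilon[x\leftarrow x+1]$ increments coordinate $x$ by one. The automaton $R(\mathcal{A})$ is the (infinite-state, nondeterministic, with $\varepsilon$-transitions) automaton over alphabet $\mathcal{X}$ with states $Q=L\times\mathbb{N}^{\mathcal{X}}\times\mathcal{Z}_1(\mathcal{X})\times2^{\mathcal{X}}$ and transitions: (1) delay: $\langle\ell,\upsilon,Z,\gamma\rangle\xrightarrow{\varepsilon}\langle\ell,\upsilon,\overrightarrow{Z},\gamma\rangle$;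 (2) wrapping, for each $x\in\mathcal{X}$: $\langle\ell,\upsilon,Z,\gamma\rangle\xrightarrow{\sigma}\langle\ell,\upsilon[x\leftarrow x+1],(Z\cap[\![x=1]\!])[x\leftarrow0],\gamma\rangle$, where $\sigma=\varepsilon$ if $x\in\gamma$ and $\sigma=x$ otherwise; (3) for each edge $\langle\ell,\varphi,\lambda,\ell'\rangle\in E$ and each $\gamma'$ with $\gamma'\cup\lambda=\gamma$: $\langle\ell,\upsilon,Z,\gamma\rangle\xrightarrow{\varepsilon}\langle\ell',\upsilon[\lambda\leftarrow0],\{\nu\in Z:\upsilon+\nu\models\varphi\}[\lambda\leftarrow0],\gamma'\rangle$. A run of $R(\mathcal{A})$ on word $w\in\mathcal{X}^*$ is a finite sequence of consecutive transitions whose concatenated labels equal $w$. *)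

theory Defs
  imports Complex_Main
begin

datatype 'c cc = CTrue | CLt 'c nat | CEq 'c nat | CGt 'c nat | CAnd "'c cc" "'c cc"

type_synonym 'c val = "'c \<Rightarrow> real"

fun sat :: "'c val \<Rightarrow> 'c cc \<Rightarrow> bool" where
  "sat v CTrue = True"
| "sat v (CLt x k) = (v x < real k)"
| "sat v (CEq x k) = (v x = real k)"
| "sat v (CGt x k) = (v x > real k)"
| "sat v (CAnd a b) = (sat v a \<and> sat v b)"

definition reset :: "'c val \<Rightarrow> 'c set \<Rightarrow> 'c val" where
  "reset v r = (\<lambda>x. if x \<in> r then 0 else v x)"

definition delay :: "'c val \<Rightarrow> real \<Rightarrow> 'c val" where
  "delay v t = (\<lambda>x. v x + t)"

type_synonym ('l, 'c) edge = "'l \<times> 'c cc \<times> 'c set \<times> 'l"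

definition timed_automaton :: "'l set \<Rightarrow> ('l, 'c) edge set \<Rightarrow> bool" where
  "timed_automaton L E \<longleftrightarrow> finite L \<and> E \<subseteq> L \<times> UNIV \<times> UNIV \<times> L"

inductive ta_run :: "('l, 'c) edge set \<Rightarrow> 'l \<times> 'c val \<Rightarrow> 'c set \<Rightarrow> 'l \<times> 'c val \<Rightarrow> bool"
  for E where
  ta_refl: "ta_run E c {} c"
| ta_delay: "d \<ge> 0 \<Longrightarrow> ta_run E (l, delay v d) G c' \<Longrightarrow> ta_run E (l, v) G c'"
| ta_discrete: "(l, g, r, l') \<in> E \<Longrightarrow> sat v g \<Longrightarrow> ta_run E (l', reset v r) G c'
     \<Longrightarrow> ta_run E (l, v) (r \<union> G) c'"

datatype rel = RLt | RLe | REq | RGe | RGt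

fun rel_holds :: "rel \<Rightarrow> real \<Rightarrow> real \<Rightarrow> bool" where
  "rel_holds RLt a b = (a < b)"
| "rel_holds RLe a b = (a \<le> b)"
| "rel_holds REq a b = (a = b)"
| "rel_holds RGe a b = (a \<ge> b)"
| "rel_holds RGt a b = (a > b)"

datatype 'c zc = ZSingle 'c rel int | ZDiff 'c 'c rel int

fun zc_holds :: "'c val \<Rightarrow> 'c zc \<Rightarrow> bool" where
  "zc_holds v (ZSingle x b c) = rel_holds b (v x) (real_of_int c)"
| "zc_holds v (ZDiff x y b c) = rel_holds b (v x - v y) (real_of_int c)"

fun zc_const :: "'c zc \<Rightarrow> int" where
  "zc_const (ZSingle x b c) = c"
| "zc_const (ZDiff x y b c) = c"

definition unit_box :: "'c val set" where
  "unit_box = {v. \<forall>x. 0 \<le> v x \<and> v x \<le> 1}"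

definition zone_of :: "'c zc list \<Rightarrow> 'c val set" where
  "zone_of cs = {v \<in> unit_box. \<forall>a \<in> set cs. zc_holds v a}"

definition zones1 :: "'c val set set" where
  "zones1 = {zone_of cs | cs. \<forall>a \<in> set cs. zc_const a \<in> {-1, 0, 1}}"

definition zone_reset :: "'c val set \<Rightarrow> 'c set \<Rightarrow> 'c val set" where
  "zone_reset Z r = (\<lambda>v. reset v r) ` Z"

definition zone_future :: "'c val set \<Rightarrow> 'c val set" where
  "zone_future Z = {delay v t | v t. v \<in> Z \<and> t \<ge> 0} \<inter> unit_box"

definition clock_eq1 :: "'c \<Rightarrow> 'c val set" where
  "clock_eq1 x = {v. v x = 1}"

type_synonym ('l, 'c) rstate = "'l \<times> ('c \<Rightarrow> nat) \<times> 'c val set \<times> 'c set"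

definition nreset :: "('c \<Rightarrow> nat) \<Rightarrow> 'c set \<Rightarrow> ('c \<Rightarrow> nat)" where
  "nreset u r = (\<lambda>x. if x \<in> r then 0 else u x)"

text \<open>Single transitions of R(A); label None is epsilon, Some x is letter x.\<close>
inductive R_step :: "('l, 'c) edge set \<Rightarrow> ('l, 'c) rstate \<Rightarrow> 'c option \<Rightarrow> ('l, 'c) rstate \<Rightarrow> bool"
  for E where
  R_delay: "R_step E (l, u, Z, \<gamma>) None (l, u, zone_future Z, \<gamma>)"
| R_wrap: "R_step E (l, u, Z, \<gamma>) (if x \<in> \<gamma> then None else Some x)
     (l, u(x := Suc (u x)), zone_reset (Z \<inter> clock_eq1 x) {x}, \<gamma>)"
| R_edge: "(l, \<phi>, r, l') \<in> E \<Longrightarrow> \<gamma>' \<union> r = \<gamma> \<Longrightarrow>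
     R_step E (l, u, Z, \<gamma>) None
       (l', nreset u r, zone_reset {v \<in> Z. sat (\<lambda>x. real (u x) + v x) \<phi>} r, \<gamma>')"

definition label_word :: "'c option \<Rightarrow> 'c list" where
  "label_word s = (case s of None \<Rightarrow> [] | Some x \<Rightarrow> [x])"

inductive R_run :: "('l, 'c) edge set \<Rightarrow> ('l, 'c) rstate \<Rightarrow> 'c list \<Rightarrow> ('l, 'c) rstate \<Rightarrow> bool"
  for E where
  R_refl: "R_run E q [] q"
| R_cons: "R_step E q s q' \<Longrightarrow> R_run E q' w q'' \<Longrightarrow> R_run E q (label_word s @ w) q''"

end

theory Submission
  imports Defs
begin


definition gh :: "('v \<Rightarrow> real) \<Rightarrow> ('v \<times> 'v \<times> rel \<times> int) \<Rightarrow> bool" where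
  "gh w g = (case g of (a,b,r,c) \<Rightarrow> rel_holds r (w a - w b) (real_of_int c))"

fun lo1 :: "'v \<Rightarrow> ('v \<times> 'v \<times> rel \<times> int) \<Rightarrow> ('v \<times> int \<times> bool) list" where
  "lo1 x (a,b,r,c) = (if a = x \<and> b \<noteq> x then
      (case r of RGt \<Rightarrow> [(b,c,True)] | RGe \<Rightarrow> [(b,c,False)] | REq \<Rightarrow> [(b,c,False)] | _ \<Rightarrow> [])
    else if b = x \<and> a \<noteq> x then
      (case r of RLt \<Rightarrow> [(a,-c,True)] | RLe \<Rightarrow> [(a,-c,False)] | REq \<Rightarrow> [(a,-c,False)] | _ \<Rightarrow> [])
    else [])"

fun up1 :: "'v \<Rightarrow> ('v \<times> 'v \<times> rel \<times> int) \<Rightarrow> ('v \<times> int \<times> bool) list" where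
  "up1 x (a,b,r,c) = (if a = x \<and> b \<noteq> x then
      (case r of RLt \<Rightarrow> [(b,c,True)] | RLe \<Rightarrow> [(b,c,False)] | REq \<Rightarrow> [(b,c,False)] | _ \<Rightarrow> [])
    else if b = x \<and> a \<noteq> x then
      (case r of RGt \<Rightarrow> [(a,-c,True)] | RGe \<Rightarrow> [(a,-c,False)] | REq \<Rightarrow> [(a,-c,False)] | _ \<Rightarrow> [])
    else [])"

fun lb_ok :: "('v \<Rightarrow> real) \<Rightarrow> real \<Rightarrow> ('v \<times> int \<times> bool) \<Rightarrow> bool" where
  "lb_ok w t (p,k,s) = (if s then w p + k < t else w p + k \<le> t)"

fun ub_ok :: "('v \<Rightarrow> real) \<Rightarrow> real \<Rightarrow> ('v \<times> int \<times> bool) \<Rightarrow> bool" where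
  "ub_ok w t (q,m,s) = (if s then t < w q + m else t \<le> w q + m)"

fun comb :: "('v \<times> int \<times> bool) \<Rightarrow> ('v \<times> int \<times> bool) \<Rightarrow> ('v \<times> 'v \<times> rel \<times> int)" where
  "comb (p,k,s) (q,m,s') = (p, q, if s \<or> s' then RLt else RLe, m - k)"

definition elim :: "'v \<Rightarrow> 'v \<Rightarrow> ('v \<times> 'v \<times> rel \<times> int) list \<Rightarrow> ('v \<times> 'v \<times> rel \<times> int) list" where
  "elim x z D = filter (\<lambda>(a,b,r,c). a \<noteq> x \<and> b \<noteq> x) D
     @ map (\<lambda>(a,b,r,c). (z,z,r,c)) (filter (\<lambda>(a,b,r,c). a = x \<and> b = x) D)
     @ [comb l h. l \<leftarrow> concat (map (lo1 x) D), h \<leftarrow> concat (map (up1 x) D)]"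

lemma lo1_var: "(p,k,s) \<in> set (lo1 x g) \<Longrightarrow> p \<noteq> x"
  by (cases g) (auto split: if_splits rel.splits)
lemma up1_var: "(p,k,s) \<in> set (up1 x g) \<Longrightarrow> p \<noteq> x"
  by (cases g) (auto split: if_splits rel.splits)

lemma one_x:
  assumes "(a = x) \<noteq> (b = x)"
  shows "gh (w(x:=t)) (a,b,r,c) \<longleftrightarrow>
    (\<forall>l\<in>set (lo1 x (a,b,r,c)). lb_ok w t l) \<and> (\<forall>h\<in>set (up1 x (a,b,r,c)). ub_ok w t h)"
  using assms by (cases r) (auto simp: gh_def)

lemma comb_ok: "lb_ok w t l \<Longrightarrow> ub_ok w t h \<Longrightarrow> gh w (comb l h)"
  by (cases l; cases h) (auto simp: gh_def split: if_splits)

lemma interval: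
  fixes Lo Hi :: "(real \<times> bool) set"
  assumes "finite Lo" "finite Hi"
    and comp: "\<forall>(a,s)\<in>Lo. \<forall>(b,s')\<in>Hi. (if s \<or> s' then a < b else a \<le> b)"
  shows "\<exists>t. (\<forall>(a,s)\<in>Lo. if s then a < t else a \<le> t) \<and> (\<forall>(b,s)\<in>Hi. if s then t < b else t \<le> b)"
proof (cases "Lo = {}")
  case True
  show ?thesis
  proof (cases "Hi = {}")
    case True with \<open>Lo = {}\<close> show ?thesis by auto
  next
    case False
    let ?M = "Min (fst ` Hi)"
    have "?M \<le> b" if "(b,s) \<in> Hi" for b s
      using assms(2) that by (intro Min_le) (auto intro: rev_image_eqI)
    then have "\<forall>(b,s)\<in>Hi. ?M - 1 < b" by fastforce
    then have "\<forall>(b,s)\<in>Hi. if s then ?M - 1 < b else ?M - 1 \<le> b" by auto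
    then show ?thesis using True by blast
  qed
next
  case False
  define m where "m = Max (fst ` Lo)"
  have mge0: "a \<le> m" if "(a,s) \<in> Lo" for a s
    using assms(1) that unfolding m_def by (intro Max_ge) (auto intro: rev_image_eqI)
  then have mge: "\<forall>(a,s)\<in>Lo. a \<le> m" by blast
  have min: "m \<in> fst ` Lo" using assms(1) False unfolding m_def by (intro Max_in) auto
  then obtain s0 where s0: "(m, s0) \<in> Lo" by auto
  show ?thesis
  proof (cases "\<exists>s'. (m, s') \<in> Hi")
    case True
    then obtain s1 where s1: "(m,s1) \<in> Hi" by auto
    have "\<forall>(a,s)\<in>Lo. if s then a < m else a \<le> m"
    proof (intro ballI, clarify)
      fix a s assume "(a,s) \<in> Lo"
      with comp s1 mge show "if s then a < m else a \<le> m" by (force split: if_splits)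
    qed
    moreover have "\<forall>(b,s)\<in>Hi. if s then m < b else m \<le> b"
    proof (intro ballI, clarify)
      fix b s assume "(b,s) \<in> Hi"
      with comp s0 show "if s then m < b else m \<le> b" by (force split: if_splits)
    qed
    ultimately show ?thesis by blast
  next
    case False
    have hgt: "\<forall>(b,s)\<in>Hi. m < b"
    proof (intro ballI, clarify)
      fix b s assume bs: "(b,s) \<in> Hi"
      with comp s0 have "m \<le> b" by (force split: if_splits)
      moreover have "m \<noteq> b" using False bs by auto
      ultimately show "m < b" by auto
    qed
    show ?thesis
    proof (cases "Hi = {}")
      case True
      then show ?thesis using mge by (auto intro!: exI[of _ "m+1"] split: if_splits)
    next
      case hne: False
      define M where "M = Min (fst ` Hi)"
      have Mle0: "M \<le> b" if "(b,s) \<in> Hi" for b s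
        using assms(2) that unfolding M_def by (intro Min_le) (auto intro: rev_image_eqI)
      then have Mle: "\<forall>(b,s)\<in>Hi. M \<le> b" by blast
      have "M \<in> fst ` Hi" using assms(2) hne unfolding M_def by (intro Min_in) auto
      then have "m < M" using hgt by auto
      then show ?thesis using mge Mle
        by (auto intro!: exI[of _ "(m+M)/2"] split: if_splits)
    qed
  qed
qed

lemma FM:
  assumes "z \<noteq> x"
  shows "(\<exists>t. \<forall>g\<in>set D. gh (w(x:=t)) g) \<longleftrightarrow> (\<forall>g\<in>set (elim x z D). gh w g)"
proof
  assume "\<exists>t. \<forall>g\<in>set D. gh (w(x:=t)) g"
  then obtain t where t: "\<forall>g\<in>set D. gh (w(x:=t)) g" by blast
  have lo: "lb_ok w t l" if "l \<in> set (lo1 x g)" "g \<in> set D" for l g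
  proof -
    obtain a b r c where g: "g = (a,b,r,c)" by (cases g)
    have "(a = x) \<noteq> (b = x)" using that g by (auto split: if_splits)
    with t that g one_x show ?thesis by metis
  qed
  have up: "ub_ok w t h" if "h \<in> set (up1 x g)" "g \<in> set D" for h g
  proof -
    obtain a b r c where g: "g = (a,b,r,c)" by (cases g)
    have "(a = x) \<noteq> (b = x)" using that g by (auto split: if_splits)
    with t that g one_x show ?thesis by metis
  qed
  show "\<forall>g\<in>set (elim x z D). gh w g"
  proof
    fix g assume "g \<in> set (elim x z D)"
    then consider (f) "g \<in> set D" "fst g \<noteq> x" "fst (snd g) \<noteq> x"
      | (s) a r c where "(a,a,r,c) \<in> set D" "a = x" "g = (z,z,r,c)"
      | (c) l h g1 g2 where "l \<in> set (lo1 x g1)" "g1 \<in> set D" "h \<in> set (up1 x g2)" "g2 \<in> set D" "g = comb l h"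
      unfolding elim_def by auto
    then show "gh w g"
    proof cases
      case f
      then have "gh (w(x:=t)) g" using t by auto
      with f show ?thesis by (cases g) (auto simp: gh_def)
    next
      case s
      then have "gh (w(x:=t)) (a,a,r,c)" using t by auto
      with s show ?thesis by (auto simp: gh_def)
    next
      case c
      then show ?thesis using lo up comb_ok by metis
    qed
  qed
next
  assume A: "\<forall>g\<in>set (elim x z D). gh w g"
  define Ls where "Ls = concat (map (lo1 x) D)"
  define Hs where "Hs = concat (map (up1 x) D)"
  let ?f = "\<lambda>(p,k::int,s::bool). (w p + real_of_int k, s)"
  have comp: "\<forall>(a,s)\<in>?f ` set Ls. \<forall>(b,s')\<in>?f ` set Hs. (if s \<or> s' then a < b else a \<le> b)"
  proof (clarify)
    fix p k s q m s'
    assume "(p,k,s) \<in> set Ls" "(q,m,s') \<in> set Hs"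
    then have "comb (p,k,s) (q,m,s') \<in> set [comb l h. l \<leftarrow> Ls, h \<leftarrow> Hs]" by force
    then have "comb (p,k,s) (q,m,s') \<in> set (elim x z D)" unfolding elim_def Ls_def Hs_def by simp
    with A have "gh w (comb (p,k,s) (q,m,s'))" by blast
    then show "if s \<or> s' then w p + real_of_int k < w q + real_of_int m
               else w p + real_of_int k \<le> w q + real_of_int m"
      by (auto simp: gh_def split: if_splits)
  qed
  obtain t where t1: "\<forall>(a,s)\<in>?f ` set Ls. if s then a < t else a \<le> t"
     and t2: "\<forall>(b,s)\<in>?f ` set Hs. if s then t < b else t \<le> b"
    using interval[OF _ _ comp] by blast
  have lok: "lb_ok w t l" if "l \<in> set Ls" for l
    using t1 that by (cases l) (force split: if_splits)
  have uok: "ub_ok w t h" if "h \<in> set Hs" for h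
    using t2 that by (cases h) (force split: if_splits)
  have "\<forall>g\<in>set D. gh (w(x:=t)) g"
  proof
    fix g assume gD: "g \<in> set D"
    obtain a b r c where g: "g = (a,b,r,c)" by (cases g)
    consider "a \<noteq> x" "b \<noteq> x" | "a = x" "b = x" | "(a = x) \<noteq> (b = x)" by blast
    then show "gh (w(x:=t)) g"
    proof cases
      case 1
      then have "g \<in> set (elim x z D)" using gD g unfolding elim_def by auto
      with A 1 g show ?thesis by (auto simp: gh_def)
    next
      case 2
      then have "(z,z,r,c) \<in> set (elim x z D)" using gD g unfolding elim_def by force
      with A 2 g show ?thesis by (auto simp: gh_def)
    next
      case 3
      have "set (lo1 x g) \<subseteq> set Ls" using gD unfolding Ls_def by auto
      then have "\<forall>l\<in>set (lo1 x (a,b,r,c)). lb_ok w t l" using lok g by blast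
      moreover have "set (up1 x g) \<subseteq> set Hs" using gD unfolding Hs_def by auto
      then have "\<forall>h\<in>set (up1 x (a,b,r,c)). ub_ok w t h" using uok g by blast
      ultimately show ?thesis using one_x[OF 3] g by blast
    qed
  qed
  then show "\<exists>t. \<forall>g\<in>set D. gh (w(x:=t)) g" by blast
qed



definition ev :: "('c \<Rightarrow> real) \<Rightarrow> 'c option \<Rightarrow> real" where
  "ev v a = (case a of None \<Rightarrow> 0 | Some y \<Rightarrow> v y)"

lemma ev_simps[simp]: "ev v None = 0" "ev v (Some y) = v y" by (auto simp: ev_def)

fun flip :: "rel \<Rightarrow> rel" where
  "flip RLt = RGt" | "flip RLe = RGe" | "flip REq = REq" | "flip RGe = RLe" | "flip RGt = RLt"

lemma flip_holds: "rel_holds (flip r) d (-c) \<longleftrightarrow> rel_holds r (-d) c"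
  by (cases r) auto

definition clamp :: "rel \<Rightarrow> int \<Rightarrow> rel \<times> int" where
  "clamp r c = (if c \<ge> 2 then (if r = RLt \<or> r = RLe then (RLe,1) else (RGt,1))
      else if c \<le> -2 then (if r = RGt \<or> r = RGe then (RGe,-1) else (RLt,-1)) else (r,c))"

lemma clamp_holds:
  assumes "-1 \<le> d" "d \<le> 1"
  shows "rel_holds (fst (clamp r c)) d (real_of_int (snd (clamp r c))) \<longleftrightarrow> rel_holds r d (real_of_int c)"
proof -
  consider "c \<ge> 2" | "c \<le> -2" | "-2 < c \<and> c < 2" by linarith
  then show ?thesis
  proof cases
    case 1
    then have "real_of_int c \<ge> 2" by simp
    then show ?thesis using 1 assms by (cases r) (auto simp: clamp_def)
  next
    case 2
    then have "real_of_int c \<le> -2" by simp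
    then show ?thesis using 2 assms by (cases r) (auto simp: clamp_def)
  qed (auto simp: clamp_def)
qed

lemma clamp_const: "snd (clamp r c) \<in> {-1,0,1} \<or> (-2 < c \<and> c < 2 \<and> snd (clamp r c) = c)"
  by (auto simp: clamp_def)

lemma clamp_const': "snd (clamp r c) \<in> {-1,0,1}"
proof -
  have "snd (clamp r c) = c \<Longrightarrow> -2 < c \<Longrightarrow> c < 2 \<Longrightarrow> c \<in> {-1,0,1}" by auto
  then show ?thesis using clamp_const[of r c] by auto
qed

fun to_zc :: "('c option \<times> 'c option \<times> rel \<times> int) \<Rightarrow> 'c zc" where
  "to_zc (Some y, None, r, c) = ZSingle y (fst (clamp r c)) (snd (clamp r c))"
| "to_zc (None, Some y, r, c) = ZSingle y (fst (clamp (flip r) (-c))) (snd (clamp (flip r) (-c)))"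
| "to_zc (Some y, Some z, r, c) = ZDiff y z (fst (clamp r c)) (snd (clamp r c))"
| "to_zc (None, None, r, c) = ZDiff undefined undefined (fst (clamp r c)) (snd (clamp r c))"

lemma to_zc_const: "zc_const (to_zc g) \<in> {-1,0,1}"
  by (cases g rule: to_zc.cases) (auto simp: clamp_const' simp del: insert_iff)

lemma to_zc_holds:
  assumes "v \<in> unit_box"
  shows "zc_holds v (to_zc g) \<longleftrightarrow> gh (ev v) g"
proof -
  have b: "0 \<le> v y" "v y \<le> 1" for y using assms by (auto simp: unit_box_def)
  show ?thesis
  proof (cases g rule: to_zc.cases)
    case (1 y r c)
    then show ?thesis using clamp_holds[of "v y" r c] b[of y] by (auto simp: gh_def)
  next
    case (2 y r c)
    have "-1 \<le> v y" "v y \<le> 1" using b[of y] by auto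
    then show ?thesis using 2 clamp_holds[of "v y" "flip r" "-c"] flip_holds[of r "v y" c]
      by (auto simp: gh_def)
  next
    case (3 y z r c)
    have "-1 \<le> v y - v z" "v y - v z \<le> 1" using b[of y] b[of z] by auto
    then show ?thesis using 3 clamp_holds[of "v y - v z" r c] by (auto simp: gh_def)
  next
    case (4 r c)
    then show ?thesis using clamp_holds[of 0 r c] by (auto simp: gh_def)
  qed
qed

definition gz :: "('c option \<times> 'c option \<times> rel \<times> int) list \<Rightarrow> ('c \<Rightarrow> real) set" where
  "gz D = {v \<in> unit_box. \<forall>g\<in>set D. gh (ev v) g}"

lemma gz_zones1: "gz D \<in> zones1"
proof -
  have e: "(\<forall>g\<in>set D. gh (ev v) g) = (\<forall>a\<in>set (map to_zc D). zc_holds v a)" if "v \<in> unit_box" for v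
    using to_zc_holds[OF that] by (simp del: to_zc.simps)
  have "gz D = zone_of (map to_zc D)"
    unfolding gz_def zone_of_def using e by blast
  moreover have "\<forall>a\<in>set (map to_zc D). zc_const a \<in> {-1,0,1}" using to_zc_const by auto
  ultimately show ?thesis unfolding zones1_def by blast
qed

fun tog :: "'c zc \<Rightarrow> ('c option \<times> 'c option \<times> rel \<times> int)" where
  "tog (ZSingle y r c) = (Some y, None, r, c)"
| "tog (ZDiff y z r c) = (Some y, Some z, r, c)"

lemma tog_holds: "gh (ev v) (tog a) \<longleftrightarrow> zc_holds v a"
  by (cases a) (auto simp: gh_def)

lemma zones1_gz: "Z \<in> zones1 \<Longrightarrow> \<exists>D. Z = gz D"
proof -
  assume "Z \<in> zones1"
  then obtain cs where "Z = zone_of cs" unfolding zones1_def by blast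
  then have "Z = gz (map tog cs)" unfolding zone_of_def gz_def by (auto simp: tog_holds)
  then show ?thesis by blast
qed

lemma zones1_box: "Z \<in> zones1 \<Longrightarrow> Z \<subseteq> unit_box"
  unfolding zones1_def zone_of_def by auto



definition all_clocks :: "'c::finite list" where
  "all_clocks = (SOME xs. set xs = UNIV)"

lemma set_all_clocks: "set (all_clocks :: 'c::finite list) = UNIV"
  unfolding all_clocks_def by (rule someI_ex) (rule finite_list, simp)

definition boxg :: "('c::finite option \<times> 'c option \<times> rel \<times> int) list" where
  "boxg = concat (map (\<lambda>y. [(Some y, None, RGe, 0), (Some y, None, RLe, 1)]) all_clocks)"

lemma box_iff: "(v::'c::finite \<Rightarrow> real) \<in> unit_box \<longleftrightarrow> (\<forall>g\<in>set boxg. gh (ev v) g)"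
  unfolding boxg_def unit_box_def by (auto simp: gh_def set_all_clocks)

lemma gz_alt: "gz D = {v::'c::finite \<Rightarrow> real. \<forall>g\<in>set (D @ boxg). gh (ev v) g}"
  unfolding gz_def using box_iff by auto

lemma zone_eq1: "gz D \<inter> clock_eq1 x = gz ((Some x, None, REq, 1) # D)"
  unfolding gz_def clock_eq1_def by (auto simp: gh_def)

fun gguard :: "('c \<Rightarrow> nat) \<Rightarrow> 'c cc \<Rightarrow> ('c option \<times> 'c option \<times> rel \<times> int) list" where
  "gguard u CTrue = []"
| "gguard u (CLt x k) = [(Some x, None, RLt, int k - int (u x))]"
| "gguard u (CEq x k) = [(Some x, None, REq, int k - int (u x))]"
| "gguard u (CGt x k) = [(Some x, None, RGt, int k - int (u x))]"
| "gguard u (CAnd a b) = gguard u a @ gguard u b"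

lemma gguard_sat: "sat (\<lambda>x. real (u x) + v x) \<phi> \<longleftrightarrow> (\<forall>g\<in>set (gguard u \<phi>). gh (ev v) g)"
proof (induction \<phi>)
  case (CAnd a b) thus ?case by (simp add: ball_Un)
qed (auto simp: gh_def)

lemma zone_guard: "{v \<in> gz D. sat (\<lambda>x. real (u x) + v x) \<phi>} = gz (gguard u \<phi> @ D)"
  unfolding gz_def using gguard_sat by auto

lemma ev_upd: "ev (v(x:=t)) = (ev v)(Some x := t)"
  by (rule ext) (auto simp: ev_def split: option.splits)

lemma reset_single: "zone_reset (gz D) {x} = gz ((Some x, None, REq, 0) # elim (Some x) None (D @ boxg))"
proof (rule set_eqI)
  fix v :: "'a \<Rightarrow> real"
  have L: "v \<in> zone_reset (gz D) {x} \<longleftrightarrow> v \<in> unit_box \<and> v x = 0 \<and> (\<exists>t. v(x:=t) \<in> gz D)"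
  proof
    assume "v \<in> zone_reset (gz D) {x}"
    then obtain z where z: "z \<in> gz D" "v = reset z {x}" unfolding zone_reset_def by auto
    then have "z \<in> unit_box" unfolding gz_def by auto
    then have "v \<in> unit_box" using z(2) unfolding unit_box_def reset_def by auto
    moreover have "v x = 0" using z(2) by (simp add: reset_def)
    moreover have "v(x := z x) = z" using z(2) by (auto simp: reset_def)
    ultimately show "v \<in> unit_box \<and> v x = 0 \<and> (\<exists>t. v(x:=t) \<in> gz D)" using z(1)
      by (intro conjI exI[of _ "z x"]) auto
  next
    assume "v \<in> unit_box \<and> v x = 0 \<and> (\<exists>t. v(x:=t) \<in> gz D)"
    then obtain t where "v x = 0" "v(x:=t) \<in> gz D" by blast
    moreover have "v = reset (v(x:=t)) {x}" using \<open>v x = 0\<close> by (auto simp: reset_def)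
    ultimately show "v \<in> zone_reset (gz D) {x}" unfolding zone_reset_def by blast
  qed
  have "(\<exists>t. v(x:=t) \<in> gz D) \<longleftrightarrow> (\<exists>t. \<forall>g\<in>set (D @ boxg). gh ((ev v)(Some x := t)) g)"
    unfolding gz_alt by (simp add: ev_upd)
  also have "\<dots> \<longleftrightarrow> (\<forall>g\<in>set (elim (Some x) None (D @ boxg)). gh (ev v) g)"
    by (rule FM) simp
  finally have E: "(\<exists>t. v(x:=t) \<in> gz D) \<longleftrightarrow> (\<forall>g\<in>set (elim (Some x) None (D @ boxg)). gh (ev v) g)" .
  have "gh (ev v) (Some x, None, REq, 0) \<longleftrightarrow> v x = 0" by (simp add: gh_def)
  then have "v \<in> gz ((Some x, None, REq, 0) # elim (Some x) None (D @ boxg)) \<longleftrightarrow>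
     v \<in> unit_box \<and> v x = 0 \<and> (\<forall>g\<in>set (elim (Some x) None (D @ boxg)). gh (ev v) g)"
    unfolding gz_def by simp
  then show "v \<in> zone_reset (gz D) {x} \<longleftrightarrow> v \<in> gz ((Some x, None, REq, 0) # elim (Some x) None (D @ boxg))"
    using L E by blast
qed

lemma reset_insert: "zone_reset Z (insert x r) = zone_reset (zone_reset Z r) {x}"
proof -
  have "reset (reset v r) {x} = reset v (insert x r)" for v :: "'a \<Rightarrow> real"
    by (auto simp: reset_def)
  then show ?thesis unfolding zone_reset_def image_image by simp
qed

lemma reset_zones1:
  fixes Z :: "('c::finite \<Rightarrow> real) set"
  assumes "Z \<in> zones1"
  shows "zone_reset Z r \<in> zones1"
proof -
  have "finite r" by simp
  then show ?thesis
  proof (induction r)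
    case empty
    have "reset v {} = v" for v :: "'c \<Rightarrow> real" by (auto simp: reset_def)
    then show ?case using assms unfolding zone_reset_def by simp
  next
    case (insert x r)
    then obtain D where "zone_reset Z r = gz D" using zones1_gz by blast
    then show ?case using reset_insert[of Z x r] reset_single[of D x] gz_zones1 by metis
  qed
qed

definition un :: "'c option option \<Rightarrow> 'c option" where
  "un a = (case a of None \<Rightarrow> None | Some b \<Rightarrow> b)"

fun unl :: "('c option option \<times> 'c option option \<times> rel \<times> int) \<Rightarrow> ('c option \<times> 'c option \<times> rel \<times> int)" where
  "unl (a,b,r,c) = (un a, un b, r, c)"

fun liftg :: "('c option \<times> 'c option \<times> rel \<times> int) \<Rightarrow> ('c option option \<times> 'c option option \<times> rel \<times> int)" where
  "liftg (a,b,r,c) = (Some a, Some b, r, c)"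

lemma future_gz:
  "zone_future (gz D) = gz (map unl (elim (Some None) None (map liftg (D @ boxg) @ [(Some None, None, RGe, 0)])))"
proof (rule set_eqI)
  fix v :: "'a::finite \<Rightarrow> real"
  define W where "W = (\<lambda>a. ev v (un a))"
  have L: "v \<in> zone_future (gz D) \<longleftrightarrow> v \<in> unit_box \<and> (\<exists>t\<ge>0. (\<lambda>y. v y - t) \<in> gz D)"
  proof
    assume "v \<in> zone_future (gz D)"
    then obtain v0 t where "v0 \<in> gz D" "t \<ge> 0" "v = delay v0 t" "v \<in> unit_box"
      unfolding zone_future_def by auto
    moreover have "(\<lambda>y. v y - t) = v0" using \<open>v = delay v0 t\<close> by (auto simp: delay_def)
    ultimately show "v \<in> unit_box \<and> (\<exists>t\<ge>0. (\<lambda>y. v y - t) \<in> gz D)" by auto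
  next
    assume "v \<in> unit_box \<and> (\<exists>t\<ge>0. (\<lambda>y. v y - t) \<in> gz D)"
    then obtain t where "v \<in> unit_box" "t \<ge> 0" "(\<lambda>y. v y - t) \<in> gz D" by blast
    moreover have "v = delay (\<lambda>y. v y - t) t" by (auto simp: delay_def)
    ultimately show "v \<in> zone_future (gz D)" unfolding zone_future_def by blast
  qed
  have sh: "gh (ev (\<lambda>y. v y - t)) g \<longleftrightarrow> gh (W(Some None := t)) (liftg g)" for t g
  proof -
    have "ev (\<lambda>y. v y - t) a = (W(Some None := t)) (Some a) - t" for a
      by (cases a) (auto simp: W_def un_def)
    then show ?thesis by (cases g) (auto simp: gh_def)
  qed
  have t0: "gh (W(Some None := t)) (Some None, None, RGe, 0) \<longleftrightarrow> t \<ge> 0" for t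
    by (auto simp: gh_def W_def un_def)
  have "(\<exists>t\<ge>0. (\<lambda>y. v y - t) \<in> gz D) \<longleftrightarrow>
      (\<exists>t. \<forall>g\<in>set (map liftg (D @ boxg) @ [(Some None, None, RGe, 0)]). gh (W(Some None := t)) g)"
  proof -
    have "(\<forall>g\<in>set (map liftg (D @ boxg) @ [(Some None, None, RGe, 0)]). gh (W(Some None := t)) g)
      \<longleftrightarrow> t \<ge> 0 \<and> (\<lambda>y. v y - t) \<in> gz D" for t
      unfolding gz_alt using sh[of t] t0[of t] by (auto simp del: liftg.simps)
    then show ?thesis by blast
  qed
  also have "\<dots> \<longleftrightarrow> (\<forall>g\<in>set (elim (Some None) None (map liftg (D @ boxg) @ [(Some None, None, RGe, 0)])). gh W g)"
    by (rule FM) simp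
  also have "\<dots> \<longleftrightarrow> (\<forall>g\<in>set (map unl (elim (Some None) None (map liftg (D @ boxg) @ [(Some None, None, RGe, 0)]))). gh (ev v) g)"
  proof -
    have "gh W g \<longleftrightarrow> gh (ev v) (unl g)" for g by (cases g) (auto simp: gh_def W_def)
    then show ?thesis by simp
  qed
  finally have E: "(\<exists>t\<ge>0. (\<lambda>y. v y - t) \<in> gz D) \<longleftrightarrow> (\<forall>g\<in>set (map unl (elim (Some None) None (map liftg (D @ boxg) @ [(Some None, None, RGe, 0)]))). gh (ev v) g)" .
  have "v \<in> gz (map unl (elim (Some None) None (map liftg (D @ boxg) @ [(Some None, None, RGe, 0)]))) \<longleftrightarrow>
    v \<in> unit_box \<and> (\<forall>g\<in>set (map unl (elim (Some None) None (map liftg (D @ boxg) @ [(Some None, None, RGe, 0)]))). gh (ev v) g)"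
    by (simp only: gz_def mem_Collect_eq)
  then show "v \<in> zone_future (gz D) \<longleftrightarrow> v \<in> gz (map unl (elim (Some None) None (map liftg (D @ boxg) @ [(Some None, None, RGe, 0)])))"
    using L E by blast
qed

lemma future_zones1: "(Z :: ('c::finite \<Rightarrow> real) set) \<in> zones1 \<Longrightarrow> zone_future Z \<in> zones1"
  using zones1_gz future_gz gz_zones1 by metis

lemma eq1_zones1: "(Z :: ('c::finite \<Rightarrow> real) set) \<in> zones1 \<Longrightarrow> Z \<inter> clock_eq1 x \<in> zones1"
  using zones1_gz zone_eq1 gz_zones1 by metis

lemma guard_zones1: "(Z :: ('c::finite \<Rightarrow> real) set) \<in> zones1 \<Longrightarrow> {v \<in> Z. sat (\<lambda>x. real (u x) + v x) \<phi>} \<in> zones1"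
  using zones1_gz zone_guard gz_zones1 by metis

lemma zero_zones1: "{(\<lambda>_. 0) :: 'c::finite \<Rightarrow> real} \<in> zones1"
proof -
  have "{(\<lambda>_. 0) :: 'c \<Rightarrow> real} = gz (map (\<lambda>y. (Some y, None, REq, 0)) all_clocks)"
    by (auto simp: gz_def gh_def set_all_clocks unit_box_def)
  then show ?thesis using gz_zones1 by metis
qed



definition pl :: "('c \<Rightarrow> nat) \<Rightarrow> ('c \<Rightarrow> real) \<Rightarrow> ('c \<Rightarrow> real)" where
  "pl u v = (\<lambda>x. real (u x) + v x)"

lemma ta_trans: "ta_run E c G1 c' \<Longrightarrow> ta_run E c' G2 c'' \<Longrightarrow> ta_run E c (G1 \<union> G2) c''"
proof (induction rule: ta_run.induct)
  case (ta_refl c) then show ?case by simp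
next
  case (ta_delay d l v G c') then show ?case by (auto intro: ta_run.ta_delay)
next
  case (ta_discrete l g r l' v G c')
  then have "ta_run E (l, v) (r \<union> (G \<union> G2)) c''" by (auto intro: ta_run.ta_discrete)
  then show ?case by (simp add: Un_assoc)
qed

lemma R_trans: "R_run E q w q' \<Longrightarrow> R_run E q' w' q'' \<Longrightarrow> R_run E q (w @ w') q''"
  by (induction rule: R_run.induct) (auto intro: R_run.intros)

lemma step_sound:
  assumes "R_step E (l,u,Z,\<gamma>) s (l',u',Z',\<gamma>')" "v' \<in> Z'"
  shows "\<exists>v\<in>Z. \<exists>G0. ta_run E (l, pl u v) G0 (l', pl u' v') \<and> G0 \<union> \<gamma>' = \<gamma>"
  using assms(1)
proof (cases rule: R_step.cases)
  case R_delay
  then obtain v t where v: "v \<in> Z" "t \<ge> 0" "v' = delay v t"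
    using assms(2) unfolding zone_future_def by auto
  have e: "delay (pl u v) t = pl u v'" using v by (auto simp: delay_def pl_def)
  have "ta_run E (l', delay (pl u v) t) {} (l', pl u' v')"
    unfolding e using R_delay by (simp add: ta_refl)
  then have "ta_run E (l, pl u v) {} (l', pl u' v')"
    using R_delay v(2) ta_run.ta_delay by metis
  then show ?thesis using v R_delay by blast
next
  case (R_wrap x)
  then obtain v where v: "v \<in> Z" "v x = 1" "v' = reset v {x}"
    using assms(2) unfolding zone_reset_def clock_eq1_def by auto
  have "pl u' v' = pl u v" using v R_wrap by (auto simp: pl_def reset_def)
  then have "ta_run E (l, pl u v) {} (l', pl u' v')" using R_wrap by (simp add: ta_refl)
  then show ?thesis using v R_wrap by blast
next
  case (R_edge \<phi> r)
  then obtain v where v: "v \<in> Z" "sat (\<lambda>x. real (u x) + v x) \<phi>" "v' = reset v r"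
    using assms(2) unfolding zone_reset_def by auto
  have e: "reset (pl u v) r = pl u' v'" using v R_edge by (auto simp: pl_def reset_def nreset_def)
  have "ta_run E (l', reset (pl u v) r) {} (l', pl u' v')" unfolding e by (rule ta_refl)
  moreover have "sat (pl u v) \<phi>" using v(2) by (simp add: pl_def)
  ultimately have "ta_run E (l, pl u v) (r \<union> {}) (l', pl u' v')"
    using R_edge ta_discrete by metis
  then show ?thesis using v R_edge by auto
qed

lemma run_sound:
  "R_run E q w q' \<Longrightarrow> q = (l,u,Z,\<gamma>) \<Longrightarrow> q' = (l',u',Z',\<gamma>') \<Longrightarrow> v' \<in> Z' \<Longrightarrow>
   \<exists>v\<in>Z. \<exists>G. ta_run E (l, pl u v) G (l', pl u' v') \<and> G \<union> \<gamma>' = \<gamma>"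
proof (induction arbitrary: l u Z \<gamma> rule: R_run.induct)
  case (R_refl q)
  then show ?case by (auto intro!: exI[of _ "{}"] ta_refl)
next
  case (R_cons q s q1 w q'')
  obtain l1 u1 Z1 \<gamma>1 where q1: "q1 = (l1,u1,Z1,\<gamma>1)" by (cases q1)
  from R_cons.IH[OF q1 R_cons.prems(2,3)] obtain v1 G1 where
    v1: "v1 \<in> Z1" "ta_run E (l1, pl u1 v1) G1 (l', pl u' v')" "G1 \<union> \<gamma>' = \<gamma>1" by blast
  from step_sound[of E l u Z \<gamma> s l1 u1 Z1 \<gamma>1 v1] R_cons.hyps(1) R_cons.prems(1) q1 v1(1)
  obtain v G0 where "v \<in> Z" "ta_run E (l, pl u v) G0 (l1, pl u1 v1)" "G0 \<union> \<gamma>1 = \<gamma>" by blast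
  then show ?case using v1 ta_trans by (metis Un_assoc)
qed




lemma delay_complete:
  fixes Z :: "('c::finite \<Rightarrow> real) set"
  shows "Z \<in> zones1 \<Longrightarrow> v \<in> Z \<Longrightarrow> d \<ge> 0 \<Longrightarrow>
    \<exists>w u' Z' v'. R_run E (l,u,Z,\<gamma>) w (l,u',Z',\<gamma>) \<and> Z' \<in> zones1 \<and> v' \<in> Z' \<and> pl u' v' = pl u (delay v d)"
proof (induction "\<Sum>y\<in>UNIV. nat \<lfloor>v y + d\<rfloor>" arbitrary: u Z v d rule: less_induct)
  case less
  have vb: "0 \<le> v y" "v y \<le> 1" for y using less.prems zones1_box unfolding unit_box_def by auto
  show ?case
  proof (cases "\<forall>y. v y + d \<le> 1")
    case True
    have "delay v d \<in> zone_future Z"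
      unfolding zone_future_def using less.prems True vb by (auto simp: unit_box_def delay_def)
    moreover have "R_run E (l,u,Z,\<gamma>) (label_word None @ []) (l,u,zone_future Z,\<gamma>)"
      by (rule R_cons[OF R_delay R_refl])
    ultimately show ?thesis using future_zones1[OF less.prems(1)] by blast
  next
    case False
    then obtain y0 where y0: "v y0 + d > 1" by (auto simp: not_le)
    define s where "s = Min (range (\<lambda>y. 1 - v y))"
    have "s \<in> range (\<lambda>y. 1 - v y)" unfolding s_def by (rule Min_in) auto
    then obtain x where x: "s = 1 - v x" by auto
    have sle: "s \<le> 1 - v y" for y unfolding s_def by (rule Min_le) auto
    have s0: "s \<ge> 0" using x vb by auto
    have sd: "s < d" using sle[of y0] y0 by auto
    define v1 where "v1 = delay v s"
    have sle': "v y + s \<le> 1" for y using sle[of y] by linarith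
    have v1f: "v1 \<in> zone_future Z"
      unfolding zone_future_def v1_def using less.prems s0 sle' vb by (auto simp: unit_box_def delay_def)
    have v1x: "v1 \<in> clock_eq1 x" unfolding v1_def clock_eq1_def delay_def using x by auto
    define Z2 where "Z2 = zone_reset (zone_future Z \<inter> clock_eq1 x) {x}"
    define v2 where "v2 = reset v1 {x}"
    define u2 where "u2 = u(x := Suc (u x))"
    have v2Z: "v2 \<in> Z2" unfolding Z2_def v2_def zone_reset_def using v1f v1x by auto
    have Z2z: "Z2 \<in> zones1" unfolding Z2_def
      by (intro reset_zones1 eq1_zones1 future_zones1 less.prems)
    have lt: "(\<Sum>y\<in>UNIV. nat \<lfloor>v2 y + (d - s)\<rfloor>) < (\<Sum>y\<in>UNIV. nat \<lfloor>v y + d\<rfloor>)"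
    proof (rule sum_strict_mono_ex1)
      have e: "v2 y + (d - s) = (if y = x then v y + d - 1 else v y + d)" for y
        unfolding v2_def v1_def reset_def delay_def using x by auto
      have "\<lfloor>v x + d - 1\<rfloor> = \<lfloor>v x + d\<rfloor> - 1" by linarith
      moreover have "\<lfloor>v x + d\<rfloor> \<ge> 1" using x sd by linarith
      ultimately show "\<forall>y\<in>UNIV. nat \<lfloor>v2 y + (d - s)\<rfloor> \<le> nat \<lfloor>v y + d\<rfloor>"
        "\<exists>a\<in>UNIV. nat \<lfloor>v2 a + (d - s)\<rfloor> < nat \<lfloor>v a + d\<rfloor>" using e by auto
    qed simp
    from less.hyps[OF lt Z2z v2Z] sd obtain w u' Z' v' where
      IH: "R_run E (l,u2,Z2,\<gamma>) w (l,u',Z',\<gamma>)" "Z' \<in> zones1" "v' \<in> Z'"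
          "pl u' v' = pl u2 (delay v2 (d - s))" by fastforce
    have "R_run E (l,u,Z,\<gamma>) (label_word None @ (label_word (if x \<in> \<gamma> then None else Some x) @ w)) (l,u',Z',\<gamma>)"
      unfolding Z2_def u2_def using IH(1) Z2_def u2_def
      by (intro R_cons[OF R_delay] R_cons[OF R_wrap]) simp
    moreover have "pl u2 (delay v2 (d - s)) = pl u (delay v d)"
      unfolding pl_def u2_def v2_def v1_def delay_def reset_def using x by (auto simp: fun_eq_iff)
    ultimately show ?thesis using IH by metis
  qed
qed

lemma complete:
  fixes Z :: "('c::finite \<Rightarrow> real) set"
  shows "ta_run E c G c' \<Longrightarrow> c = (l,\<nu>) \<Longrightarrow> Z \<in> zones1 \<Longrightarrow> (\<lambda>x. \<nu> x - real (u x)) \<in> Z \<Longrightarrow>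
    \<exists>w u' Z'. R_run E (l,u,Z,G) w (fst c', u', Z', {}) \<and> Z' \<in> zones1 \<and> (\<lambda>x. snd c' x - real (u' x)) \<in> Z'"
proof (induction arbitrary: l \<nu> u Z rule: ta_run.induct)
  case (ta_refl c)
  then show ?case by (auto intro!: exI[of _ "[]"] R_refl)
next
  case (ta_delay d l1 v G c')
  then have c: "l = l1" "\<nu> = v" by auto
  from delay_complete[OF ta_delay.prems(2,3) ta_delay.hyps(1), of E l u G]
  obtain w u1 Z1 v1 where D: "R_run E (l,u,Z,G) w (l,u1,Z1,G)" "Z1 \<in> zones1" "v1 \<in> Z1"
    "pl u1 v1 = pl u (delay (\<lambda>x. \<nu> x - real (u x)) d)" by blast
  have "v1 = (\<lambda>x. delay v d x - real (u1 x))"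
  proof
    fix x
    have "real (u1 x) + v1 x = real (u x) + (\<nu> x - real (u x) + d)" using D(4) unfolding pl_def delay_def by meson
    then show "v1 x = delay v d x - real (u1 x)" using c by (simp add: delay_def)
  qed
  with ta_delay.IH[of l1 "delay v d" Z1 u1] D c obtain w' u' Z' where
    "R_run E (l,u1,Z1,G) w' (fst c', u', Z', {})" "Z' \<in> zones1" "(\<lambda>x. snd c' x - real (u' x)) \<in> Z'"
    by auto
  then show ?case using R_trans[OF D(1)] by blast
next
  case (ta_discrete l1 g r l' v G c')
  then have c: "l = l1" "\<nu> = v" by auto
  define Z1 where "Z1 = zone_reset {vv \<in> Z. sat (\<lambda>x. real (u x) + vv x) g} r"
  have st: "R_step E (l,u,Z,r \<union> G) None (l', nreset u r, Z1, G)"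
    unfolding Z1_def using c ta_discrete.hyps(1) by (intro R_edge) auto
  have Z1z: "Z1 \<in> zones1" unfolding Z1_def by (intro reset_zones1 guard_zones1 ta_discrete.prems)
  have "(\<lambda>x. \<nu> x - real (u x)) \<in> {vv \<in> Z. sat (\<lambda>x. real (u x) + vv x) g}"
    using ta_discrete.prems(3) ta_discrete.hyps(2) c by simp
  moreover have "(\<lambda>x. reset v r x - real (nreset u r x)) = reset (\<lambda>x. \<nu> x - real (u x)) r"
    using c by (auto simp: reset_def nreset_def)
  ultimately have "(\<lambda>x. reset v r x - real (nreset u r x)) \<in> Z1" unfolding Z1_def zone_reset_def by auto
  with ta_discrete.IH[of l' "reset v r" Z1 "nreset u r"] Z1z obtain w' u' Z' where
    "R_run E (l',nreset u r,Z1,G) w' (fst c', u', Z', {})" "Z' \<in> zones1" "(\<lambda>x. snd c' x - real (u' x)) \<in> Z'"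
    by auto
  then show ?case using R_cons[OF st] by blast
qed

theorem proposition3:
  fixes L :: "'l set" and E :: "('l, 'c::finite) edge set"
    and l0 l :: 'l and \<nu> :: "'c \<Rightarrow> real" and \<gamma> :: "'c set"
  assumes "timed_automaton L E"
    and "l0 \<in> L" and "l \<in> L"
    and "\<forall>x. \<nu> x \<ge> 0"
  shows "ta_run E (l0, (\<lambda>_. 0)) \<gamma> (l, \<nu>) \<longleftrightarrow>
    (\<exists>w u Z. R_run E (l0, (\<lambda>_. 0), {(\<lambda>_. 0)}, \<gamma>) w (l, u, Z, {})
       \<and> Z \<in> zones1 \<and> (\<lambda>x. \<nu> x - real (u x)) \<in> Z)"
proof
  assume "ta_run E (l0, (\<lambda>_. 0)) \<gamma> (l, \<nu>)"
  from complete[OF this refl zero_zones1, of "\<lambda>_. 0"]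
  show "\<exists>w u Z. R_run E (l0, (\<lambda>_. 0), {(\<lambda>_. 0)}, \<gamma>) w (l, u, Z, {})
       \<and> Z \<in> zones1 \<and> (\<lambda>x. \<nu> x - real (u x)) \<in> Z" by simp
next
  assume "\<exists>w u Z. R_run E (l0, (\<lambda>_. 0), {(\<lambda>_. 0)}, \<gamma>) w (l, u, Z, {})
       \<and> Z \<in> zones1 \<and> (\<lambda>x. \<nu> x - real (u x)) \<in> Z"
  then obtain w u Z where R: "R_run E (l0, (\<lambda>_. 0), {(\<lambda>_. 0)}, \<gamma>) w (l, u, Z, {})"
    "(\<lambda>x. \<nu> x - real (u x)) \<in> Z" by blast
  from run_sound[OF R(1) refl refl R(2)] obtain G where
    T: "ta_run E (l0, pl (\<lambda>_. 0) (\<lambda>_. 0)) G (l, pl u (\<lambda>x. \<nu> x - real (u x)))" and G: "G = \<gamma>" by auto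
  have e1: "pl (\<lambda>_. 0) (\<lambda>_. 0) = (\<lambda>_. 0 :: real)" and e2: "pl u (\<lambda>x. \<nu> x - real (u x)) = \<nu>"
    by (auto simp: pl_def)
  show "ta_run E (l0, (\<lambda>_. 0)) \<gamma> (l, \<nu>)" using T unfolding e1 e2 G .
qed


end
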